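(* There exist maps $k\mapsto\Lambda_k\in\mathbb{R}^{p\times p}$, with $\Lambda_k$ a discrete-time interconnection for each $k\in\mathbb{N}$, and $Q:\mathbb{N}\to\overline{\mathcal Q}_n$ such that the system $\mathbf x^+=(I_{np}+(\Lambda_k-I_p)\otimes Q_k)\mathbf x$ has an unbounded solution.
   Context: $\otimes$ Kronecker product; $\overline{\mathcal Q}_n$ the set of symmetric positive semidefinite $n\times n$ matrices with induced 2-norm at most $1$. A discrete-time interconnection is $\Lambda=[\lambda_{ij}]$ with $\lambda_{ij}\ge0$ and $\sum_j\lambda_{ij}=1$ for all $i$. *)

theory Defs
  imports Complex_Main "Jordan_Normal_Form.Matrix"
begin

definition kron :: "'a::times mat \<Rightarrow> 'a mat \<Rightarrow> 'a mat" where
  "kron A B = mat (dim_row A * dim_row B) (dim_col A * dim_col B)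
     (\<lambda>(i,j). A $$ (i div dim_row B, j div dim_col B) * B $$ (i mod dim_row B, j mod dim_col B))"

definition vnorm :: "real vec \<Rightarrow> real" where
  "vnorm v = sqrt (v \<bullet> v)"

definition dt_interconnection :: "nat \<Rightarrow> real mat \<Rightarrow> bool" where
  "dt_interconnection p L \<longleftrightarrow> L \<in> carrier_mat p p \<and>
     (\<forall>i<p. \<forall>j<p. L $$ (i,j) \<ge> 0) \<and>
     (\<forall>i<p. (\<Sum>j<p. L $$ (i,j)) = 1)"

definition Qbar :: "nat \<Rightarrow> real mat set" where
  "Qbar n = {Q. Q \<in> carrier_mat n n \<and> transpose_mat Q = Q \<and>
     (\<forall>v\<in>carrier_vec n. v \<bullet> (Q *\<^sub>v v) \<ge> 0) \<and>
     (\<forall>v\<in>carrier_vec n. vnorm (Q *\<^sub>v v) \<le> vnorm v)}"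

end

theory Submission imports Defs begin

definition cp :: "nat \<Rightarrow> nat \<Rightarrow> real mat" where
  "cp i j = mat 3 3 (\<lambda>(r,c). if r = i then (if c = j then 1 else 0) else (if r = c then 1 else 0))"
definition Pm :: "real \<Rightarrow> real \<Rightarrow> real mat" where
  "Pm a b = mat 2 2 (\<lambda>(r,c). (if r=0 then a else b) * (if c=0 then a else b) / (a^2+b^2))"
definition Am :: "real mat \<Rightarrow> real mat \<Rightarrow> real mat" where
  "Am L Q = 1\<^sub>m 6 + kron (L - 1\<^sub>m 3) Q"

lemma sum6: "(\<Sum>i<6. (f::nat\<Rightarrow>real) i) = f 0 + f 1 + f 2 + f 3 + f 4 + (f 5::real)"
  by (simp add: numeral_eq_Suc)

lemma Am_carrier: "L \<in> carrier_mat 3 3 \<Longrightarrow> Q \<in> carrier_mat 2 2 \<Longrightarrow> Am L Q \<in> carrier_mat 6 6"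
  by (auto simp: Am_def kron_def)

lemma Am_idx: "i < 6 \<Longrightarrow> dim_vec x = 6 \<Longrightarrow> L \<in> carrier_mat 3 3 \<Longrightarrow> Q \<in> carrier_mat 2 2 \<Longrightarrow>
  (Am L Q *\<^sub>v x) $ i = x $ i + (\<Sum>j<6. (L - 1\<^sub>m 3) $$ (i div 2, j div 2) * Q $$ (i mod 2, j mod 2) * x $ j)"
proof -
  assume a: "i < 6" "dim_vec x = 6" "L \<in> carrier_mat 3 3" "Q \<in> carrier_mat 2 2"
  have "(Am L Q *\<^sub>v x) $ i = (\<Sum>j<6. Am L Q $$ (i,j) * x $ j)"
    using a Am_carrier[OF a(3,4)] by (simp add: mult_mat_vec_def scalar_prod_def lessThan_atLeast0 mult.commute)
  also have "\<dots> = (\<Sum>j<6. (if i = j then x $ j else 0) + (L - 1\<^sub>m 3) $$ (i div 2, j div 2) * Q $$ (i mod 2, j mod 2) * x $ j)"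
    using a by (intro sum.cong refl) (auto simp: Am_def kron_def distrib_right)
  also have "\<dots> = x $ i + (\<Sum>j<6. (L - 1\<^sub>m 3) $$ (i div 2, j div 2) * Q $$ (i mod 2, j mod 2) * x $ j)"
    using a by (simp add: sum.distrib)
  finally show ?thesis .
qed

lemma cpc: "cp i j \<in> carrier_mat 3 3" by (simp add: cp_def)
lemma Pmc: "Pm a b \<in> carrier_mat 2 2" by (simp add: Pm_def)

lemma cpI: "r < 3 \<Longrightarrow> c < 3 \<Longrightarrow> (cp i j - 1\<^sub>m 3) $$ (r,c) = (if r = i then (if c = j then 1 else 0) - (if c = r then 1 else 0) else 0)"
  by (auto simp: cp_def)
lemma PmI: "r < 2 \<Longrightarrow> c < 2 \<Longrightarrow> Pm a b $$ (r,c) = (if r=0 then a else b) * (if c=0 then a else b) / (a^2+b^2)"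
  by (simp add: Pm_def)

lemma six: "(i::nat) < 6 \<Longrightarrow> i = 0 \<or> i = 1 \<or> i = 2 \<or> i = 3 \<or> i = 4 \<or> i = 5" by auto

definition v6 :: "real \<Rightarrow> real \<Rightarrow> real \<Rightarrow> real \<Rightarrow> real \<Rightarrow> real \<Rightarrow> real vec" where
  "v6 a b c d e f = vec 6 (\<lambda>i. [a,b,c,d,e,f] ! i)"

lemma v6_dim[simp]: "dim_vec (v6 a b c d e f) = 6" by (simp add: v6_def)
lemma v6_idx: "v6 a b c d e f $ 0 = a" "v6 a b c d e f $ Suc 0 = b" "v6 a b c d e f $ 1 = b" "v6 a b c d e f $ 2 = c"
  "v6 a b c d e f $ 3 = d" "v6 a b c d e f $ 4 = e" "v6 a b c d e f $ 5 = f"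
  by (simp_all add: v6_def)

lemma Am_v6:
  assumes "L \<in> carrier_mat 3 3" "Q \<in> carrier_mat 2 2"
    "\<And>i. i < 6 \<Longrightarrow> x $ i + (\<Sum>j<6. (L - 1\<^sub>m 3) $$ (i div 2, j div 2) * Q $$ (i mod 2, j mod 2) * x $ j) = y $ i"
    "dim_vec x = 6" "dim_vec y = 6"
  shows "Am L Q *\<^sub>v x = y"
  apply (rule eq_vecI)
  using assms Am_idx[OF _ assms(4,1,2)] Am_carrier[OF assms(1,2)] by auto

lemma S0: "Am (cp 0 1) (Pm 1 (-1)) *\<^sub>v v6 c (-c) (3+c) (1-c) 2 2 = v6 (1+c) (-1-c) (3+c) (1-c) 2 2"
  apply (rule Am_v6)
  apply (simp_all add: cpc Pmc)
  apply (drule six)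
  apply (elim disjE; simp add: sum6 cp_def Pm_def v6_idx field_simps)
  done

lemma S1: "Am (cp 1 0) (Pm 0 1) *\<^sub>v v6 (1+c) (-1-c) (3+c) (1-c) 2 2 = v6 (1+c) (-1-c) (3+c) (-1-c) 2 2"
  apply (rule Am_v6)
  apply (simp_all add: cpc Pmc)
  apply (drule six)
  apply (elim disjE; simp add: sum6 cp_def Pm_def v6_idx field_simps)
  done

lemma S2: "Am (cp 1 2) (Pm 1 1) *\<^sub>v v6 (1+c) (-1-c) (3+c) (-1-c) 2 2 = v6 (1+c) (-(1+c)) (3+(1+c)) (1-(1+c)) 2 2"
  apply (rule Am_v6)
  apply (simp_all add: cpc Pmc)
  apply (drule six)
  apply (elim disjE; simp add: sum6 cp_def Pm_def v6_idx field_simps)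
  done

lemma sum3: "(\<Sum>i<3. (f::nat\<Rightarrow>real) i) = f 0 + f 1 + f 2"
  by (simp add: numeral_eq_Suc)
lemma sum2: "(\<Sum>i<2. (f::nat\<Rightarrow>real) i) = f 0 + f 1"
  by (simp add: numeral_eq_Suc)

lemma cp_dt: "i < 3 \<Longrightarrow> j < 3 \<Longrightarrow> dt_interconnection 3 (cp i j)"
  unfolding dt_interconnection_def
  apply (intro conjI cpc)
   apply (simp add: cp_def)
  apply (intro allI impI)
  apply (auto simp: sum3 cp_def numeral_eq_Suc less_Suc_eq)
  done

lemma vec2: "w \<in> carrier_vec 2 \<Longrightarrow> v \<bullet> w = v $ 0 * w $ 0 + v $ 1 * w $ 1"
  unfolding scalar_prod_def by (simp add: lessThan_atLeast0[symmetric] numeral_2_eq_2 lessThan_Suc add.commute)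

lemma Pm_mv: "v \<in> carrier_vec 2 \<Longrightarrow> Pm a b *\<^sub>v v = vec 2 (\<lambda>r. (if r=0 then a else b) * (a * v$0 + b * v$1) / (a^2+b^2))"
  apply (rule eq_vecI)
   apply (simp_all add: Pm_def mult_mat_vec_def scalar_prod_def sum2 lessThan_atLeast0[symmetric])
  apply (auto simp: less_Suc_eq numeral_eq_Suc add_divide_distrib algebra_simps)
  done

lemma aux1: "(x::real)*(a*t/S) + y*(b*t/S) = (a*x+b*y)*t/S"
  by (simp add: add_divide_distrib[symmetric] algebra_simps)
lemma aux2: "((a::real)*t/S) * (a*t/S) + (b*t/S) * (b*t/S) = ((a^2+b^2) * t^2) / S^2"
  by (simp add: power2_eq_square times_divide_times_eq add_divide_distrib[symmetric] algebra_simps)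

lemma cancel_sq: "(x::real) * y / x^2 = y / x"
  by (cases "x = 0") (simp_all add: power2_eq_square)

lemma Pm_Qbar: assumes "a^2 + b^2 > 0" shows "Pm a b \<in> Qbar 2"
proof -
  let ?s = "a^2+b^2"
  have s0: "?s \<noteq> 0" using assms by linarith
  have "\<forall>v\<in>carrier_vec 2. v \<bullet> (Pm a b *\<^sub>v v) \<ge> 0"
  proof
    fix v :: "real vec" assume v: "v \<in> carrier_vec 2"
    let ?t = "a * v$0 + b * v$1"
    have pc: "Pm a b *\<^sub>v v \<in> carrier_vec 2" using v by (simp add: Pm_mv)
    have "v \<bullet> (Pm a b *\<^sub>v v) = v$0 * (a * ?t / ?s) + v$1 * (b * ?t / ?s)"
      using v by (subst vec2[OF pc]) (simp add: Pm_mv)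
    also have "\<dots> = ?t * ?t / ?s" by (rule aux1)
    finally have E: "v \<bullet> (Pm a b *\<^sub>v v) = ?t * ?t / ?s" .
    have "0 \<le> ?t * ?t / ?s" by (rule divide_nonneg_pos[OF zero_le_square assms])
    then show "v \<bullet> (Pm a b *\<^sub>v v) \<ge> 0" unfolding E .
  qed
  moreover have "\<forall>v\<in>carrier_vec 2. vnorm (Pm a b *\<^sub>v v) \<le> vnorm v"
  proof
    fix v :: "real vec" assume v: "v \<in> carrier_vec 2"
    let ?t = "a * v$0 + b * v$1"
    have pc: "Pm a b *\<^sub>v v \<in> carrier_vec 2" using v by (simp add: Pm_mv)
    have "(Pm a b *\<^sub>v v) \<bullet> (Pm a b *\<^sub>v v) = (a * ?t / ?s) * (a * ?t / ?s) + (b * ?t / ?s) * (b * ?t / ?s)"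
      using v by (subst vec2[OF pc]) (simp add: Pm_mv)
    also have "\<dots> = ?s * ?t^2 / ?s^2" by (rule aux2)
    also have "\<dots> = ?t^2 / ?s" by (rule cancel_sq)
    finally have e1: "(Pm a b *\<^sub>v v) \<bullet> (Pm a b *\<^sub>v v) = ?t^2 / ?s" .
    have e2: "v \<bullet> v = v$0^2 + v$1^2" using v by (simp add: vec2 power2_eq_square)
    have cs: "?t^2 \<le> ?s * (v$0^2 + v$1^2)"
    proof -
      have "?s * (v$0^2 + v$1^2) - ?t^2 = (a * v$1 - b * v$0)^2" by (simp add: power2_eq_square algebra_simps)
      then show ?thesis by (smt (verit) zero_le_power2)
    qed
    have "?t^2 / ?s \<le> v$0^2 + v$1^2"
      using cs assms by (simp add: divide_le_eq mult.commute)
    then show "vnorm (Pm a b *\<^sub>v v) \<le> vnorm v"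
      unfolding vnorm_def e1 e2 by (rule real_sqrt_le_mono)
  qed
  moreover have "transpose_mat (Pm a b) = Pm a b"
    by (rule eq_matI) (auto simp: Pm_def)
  ultimately show ?thesis unfolding Qbar_def by (simp add: Pmc)
qed

lemma vnorm_v6: "\<bar>a\<bar> \<le> vnorm (v6 a b c d e f)"
proof -
  have "v6 a b c d e f \<bullet> v6 a b c d e f = a^2+b^2+c^2+d^2+e^2+f^2"
    by (simp add: scalar_prod_def lessThan_atLeast0[symmetric] sum6 v6_idx power2_eq_square)
  then have "vnorm (v6 a b c d e f) = sqrt (a^2+b^2+c^2+d^2+e^2+f^2)" by (simp add: vnorm_def)
  moreover have "sqrt (a^2) \<le> sqrt (a^2+b^2+c^2+d^2+e^2+f^2)"
    by (rule real_sqrt_le_mono) simp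
  ultimately show ?thesis by simp
qed

definition Lk :: "nat \<Rightarrow> real mat" where
  "Lk k = (if k mod 3 = 0 then cp 0 1 else if k mod 3 = 1 then cp 1 0 else cp 1 2)"
definition Qk :: "nat \<Rightarrow> real mat" where
  "Qk k = (if k mod 3 = 0 then Pm 1 (-1) else if k mod 3 = 1 then Pm 0 1 else Pm 1 1)"
definition xs :: "nat \<Rightarrow> real vec" where
  "xs k = (let c = real (k div 3) in
     if k mod 3 = 0 then v6 c (-c) (3+c) (1-c) 2 2
     else if k mod 3 = 1 then v6 (1+c) (-1-c) (3+c) (1-c) 2 2
     else v6 (1+c) (-1-c) (3+c) (-1-c) 2 2)"

lemma step: "Am (Lk k) (Qk k) *\<^sub>v xs k = xs (Suc k)"
proof -
  have "k mod 3 < 3" by simp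
  then consider "k mod 3 = 0" | "k mod 3 = 1" | "k mod 3 = 2" by linarith
  then show ?thesis
  proof cases
    case 1
    then have "Suc k mod 3 = 1" "Suc k div 3 = k div 3" by presburger+
    then show ?thesis using 1 S0 by (simp add: Lk_def Qk_def xs_def Let_def)
  next
    case 2
    then have "Suc k mod 3 = 2" "Suc k div 3 = k div 3" by presburger+
    then show ?thesis using 2 S1 by (simp add: Lk_def Qk_def xs_def Let_def)
  next
    case 3
    then have "Suc k mod 3 = 0" "Suc k div 3 = k div 3 + 1" by presburger+
    then show ?thesis using 3 S2[of "real (k div 3)"] by (simp add: Lk_def Qk_def xs_def Let_def)
  qed
qed

theorem theorem14:
  shows "\<exists>(p::nat) (n::nat) (L::nat \<Rightarrow> real mat) (Q::nat \<Rightarrow> real mat) (x::nat \<Rightarrow> real vec).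
           (\<forall>k. dt_interconnection p (L k)) \<and>
           (\<forall>k. Q k \<in> Qbar n) \<and>
           (\<forall>k. x k \<in> carrier_vec (n * p)) \<and>
           (\<forall>k. x (Suc k) = (1\<^sub>m (n * p) + kron (L k - 1\<^sub>m p) (Q k)) *\<^sub>v x k) \<and>
           \<not> (\<exists>B. \<forall>k. vnorm (x k) \<le> B)"
proof -
  have h1: "\<forall>k. dt_interconnection 3 (Lk k)" unfolding Lk_def by (auto intro!: cp_dt)
  have h2: "\<forall>k. Qk k \<in> Qbar 2" unfolding Qk_def by (auto intro!: Pm_Qbar)
  have h3: "\<forall>k. xs k \<in> carrier_vec (2 * 3)" by (intro allI carrier_vecI) (simp add: xs_def Let_def)
  have h4: "\<forall>k. xs (Suc k) = (1\<^sub>m (2 * 3) + kron (Lk k - 1\<^sub>m 3) (Qk k)) *\<^sub>v xs k"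
    using step by (simp add: Am_def)
  have h5: "\<not> (\<exists>B. \<forall>k. vnorm (xs k) \<le> B)"
  proof
    assume "\<exists>B. \<forall>k. vnorm (xs k) \<le> B"
    then obtain B where B: "\<And>k. vnorm (xs k) \<le> B" by blast
    define m where "m = nat \<lceil>B\<rceil> + 1"
    have "xs (3 * m) = v6 (real m) (- real m) (3 + real m) (1 - real m) 2 2"
      by (simp add: xs_def Let_def)
    then have "\<bar>real m\<bar> \<le> vnorm (xs (3 * m))" using vnorm_v6 by metis
    moreover have "B < real m" unfolding m_def by linarith
    ultimately show False using B[of "3 * m"] by linarith
  qed
  show ?thesis
    apply (rule exI[of _ 3], rule exI[of _ 2], rule exI[of _ Lk], rule exI[of _ Qk], rule exI[of _ xs])
    using h1 h2 h3 h4 h5 by blast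
qed

end
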